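(* Let $A\subseteq\mathbb{N}$ and let $f:\mathbb{N}^3\to\mathbb{N}$ be defined by $f(m,n_1,n_2)=n_1$ if $m\in A$ and $f(m,n_1,n_2)=n_2$ otherwise. Then either $f$ is not strictly definable, or $f\in\mathcal{G}$.
   Context: We work in the simply typed $\lambda$-calculus (type assignment to untyped $\lambda$-terms) with a single base type $o$, with $\beta\eta$-conversion as equality. For a type $\tau$, $\omega_\tau=(\tau\to\tau)\to\tau\to\tau$. The Church numeral of $n$ is $\rho(n)=\lambda f x.f^{n}x$. A function $f:\mathbb{N}^k\to\mathbb{N}$ is strictly definable if there exist a type $\tau$ and a term $E$ with $\vdash E:\omega_\tau\to\cdots\to\omega_\tau\to\omega_\tau$ ($k$ arguments) such that $E\,\rho(n_1)\cdots\rho(n_k)=_{\beta\eta}\rho(f(n_1,\dots,n_k))$ for all $n_1,\dots,n_k$. Extended polynomials: the smallest class of functions over $\mathbb{N}$ containing the constants $0$ and $1$, projections, addition, multiplication and $\mathrm{ifzero}(n,m,p)=(\text{if } n=0 \text{ then } m \text{ else } p)$, closed under composition. $\mathcal{G}$ is the smallest class of functions over $\mathbb{N}$ that is closed under composition and contains: all extended polynomials; for every $l\geq 2$ the function $f_1^{l}(m,n_1,\dots,n_l)=n_i$ where $i=(m\bmod l)+1$; and for every $l\geq 1$ the function $f_2^{l}(m,n_1,n_2)=(\text{if } m\leq l \text{ then } n_1 \text{ else } n_2)$. *)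

theory Defs
  imports Main
begin

datatype dB = Var nat | App dB dB | Abs dB

primrec lift :: "dB \<Rightarrow> nat \<Rightarrow> dB" where
  "lift (Var i) k = (if i < k then Var i else Var (Suc i))"
| "lift (App s t) k = App (lift s k) (lift t k)"
| "lift (Abs s) k = Abs (lift s (Suc k))"

primrec subst :: "dB \<Rightarrow> dB \<Rightarrow> nat \<Rightarrow> dB" where
  "subst (Var i) s k = (if k < i then Var (i - 1) else if i = k then s else Var i)"
| "subst (App t u) s k = App (subst t s k) (subst u s k)"
| "subst (Abs t) s k = Abs (subst t (lift s 0) (Suc k))"

inductive red1 :: "dB \<Rightarrow> dB \<Rightarrow> bool" where
  beta: "red1 (App (Abs s) t) (subst s t 0)"
| eta: "red1 (Abs (App (lift s 0) (Var 0))) s"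
| appL: "red1 s t \<Longrightarrow> red1 (App s u) (App t u)"
| appR: "red1 s t \<Longrightarrow> red1 (App u s) (App u t)"
| abs: "red1 s t \<Longrightarrow> red1 (Abs s) (Abs t)"

definition beta_eta_conv :: "dB \<Rightarrow> dB \<Rightarrow> bool" where
  "beta_eta_conv = (sup red1 red1\<inverse>\<inverse>)\<^sup>*\<^sup>*"

datatype stype = O | Fun stype stype

inductive typing :: "stype list \<Rightarrow> dB \<Rightarrow> stype \<Rightarrow> bool" where
  var: "i < length \<Gamma> \<Longrightarrow> \<Gamma> ! i = T \<Longrightarrow> typing \<Gamma> (Var i) T"
| app: "typing \<Gamma> s (Fun T U) \<Longrightarrow> typing \<Gamma> t T \<Longrightarrow> typing \<Gamma> (App s t) U"
| abs: "typing (T # \<Gamma>) t U \<Longrightarrow> typing \<Gamma> (Abs t) (Fun T U)"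

definition omega :: "stype \<Rightarrow> stype" where
  "omega \<tau> = Fun (Fun \<tau> \<tau>) (Fun \<tau> \<tau>)"

text \<open>Church numeral: \<lambda>f x. f^n x  (f = Var 1, x = Var 0 under two binders).\<close>
definition church :: "nat \<Rightarrow> dB" where
  "church n = Abs (Abs (((App (Var 1)) ^^ n) (Var 0)))"

definition arrows :: "stype list \<Rightarrow> stype \<Rightarrow> stype" where
  "arrows Ts U = foldr Fun Ts U"

text \<open>A k-ary function is represented as a function on lists, meaningful on lists of length k.\<close>
definition strictly_definable :: "nat \<Rightarrow> (nat list \<Rightarrow> nat) \<Rightarrow> bool" where
  "strictly_definable k f \<longleftrightarrow>
     (\<exists>\<tau> E. typing [] E (arrows (replicate k (omega \<tau>)) (omega \<tau>)) \<and>
        (\<forall>ns. length ns = k \<longrightarrow>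
           beta_eta_conv (foldl App E (map church ns)) (church (f ns))))"

inductive ext_poly :: "nat \<Rightarrow> (nat list \<Rightarrow> nat) \<Rightarrow> bool" where
  zero: "ext_poly 0 (\<lambda>_. 0)"
| one: "ext_poly 0 (\<lambda>_. 1)"
| proj: "i < k \<Longrightarrow> ext_poly k (\<lambda>xs. xs ! i)"
| add: "ext_poly 2 (\<lambda>xs. xs ! 0 + xs ! 1)"
| mult: "ext_poly 2 (\<lambda>xs. xs ! 0 * xs ! 1)"
| ifzero: "ext_poly 3 (\<lambda>xs. if xs ! 0 = 0 then xs ! 1 else xs ! 2)"
| comp: "ext_poly m f \<Longrightarrow> length gs = m \<Longrightarrow> \<forall>g\<in>set gs. ext_poly k g \<Longrightarrow>
         ext_poly k (\<lambda>xs. f (map (\<lambda>g. g xs) gs))"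

inductive classG :: "nat \<Rightarrow> (nat list \<Rightarrow> nat) \<Rightarrow> bool" where
  ext: "ext_poly k f \<Longrightarrow> classG k f"
| f1: "l \<ge> 2 \<Longrightarrow> classG (Suc l) (\<lambda>xs. xs ! Suc (xs ! 0 mod l))"
| f2: "l \<ge> 1 \<Longrightarrow> classG 3 (\<lambda>xs. if xs ! 0 \<le> l then xs ! 1 else xs ! 2)"
| comp: "classG m f \<Longrightarrow> length gs = m \<Longrightarrow> \<forall>g\<in>set gs. classG k g \<Longrightarrow>
         classG k (\<lambda>xs. f (map (\<lambda>g. g xs) gs))"

definition in_G :: "nat \<Rightarrow> (nat list \<Rightarrow> nat) \<Rightarrow> bool" where
  "in_G k f \<longleftrightarrow> (\<exists>g. classG k g \<and> (\<forall>xs. length xs = k \<longrightarrow> g xs = f xs))"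

end

theory Submission
  imports Defs
begin


section \<open>Confluence of beta-eta\<close>

definition sq :: "('a \<Rightarrow> 'a \<Rightarrow> bool) \<Rightarrow> ('a \<Rightarrow> 'a \<Rightarrow> bool) \<Rightarrow> ('a \<Rightarrow> 'a \<Rightarrow> bool) \<Rightarrow> ('a \<Rightarrow> 'a \<Rightarrow> bool) \<Rightarrow> bool" where
  "sq R S T U = (\<forall>x y. R x y \<longrightarrow> (\<forall>z. S x z \<longrightarrow> (\<exists>u. T y u \<and> U z u)))"

definition comm :: "('a \<Rightarrow> 'a \<Rightarrow> bool) \<Rightarrow> ('a \<Rightarrow> 'a \<Rightarrow> bool) \<Rightarrow> bool" where
  "comm R S = sq R S S R"

definition diam :: "('a \<Rightarrow> 'a \<Rightarrow> bool) \<Rightarrow> bool" where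
  "diam R = comm R R"

lemma sq_sym: "sq R S T U \<Longrightarrow> sq S R U T"
  unfolding sq_def by blast

lemma sq_subset: "sq R S T U \<Longrightarrow> T \<le> T' \<Longrightarrow> sq R S T' U"
  unfolding sq_def by (blast dest: predicate2D)

lemma sq_reflcl: "sq R S T (R\<^sup>=\<^sup>=) \<Longrightarrow> S \<le> T \<Longrightarrow> sq (R\<^sup>=\<^sup>=) S T (R\<^sup>=\<^sup>=)"
  unfolding sq_def by (blast dest: predicate2D)

lemma sq_rtrancl: "sq R S S T \<Longrightarrow> sq (R\<^sup>*\<^sup>*) S S (T\<^sup>*\<^sup>*)"
  unfolding sq_def
  apply (intro strip)
  apply (erule rtranclp_induct)
   apply blast
  apply (blast intro: rtranclp.rtrancl_into_rtrancl)
  done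

lemma sq_rtrancl_reflcl_comm: "sq R S (S\<^sup>*\<^sup>*) (R\<^sup>=\<^sup>=) \<Longrightarrow> comm (R\<^sup>*\<^sup>*) (S\<^sup>*\<^sup>*)"
  unfolding comm_def by (fastforce dest: sq_reflcl sq_sym [THEN sq_rtrancl])

lemma comm_sym: "comm R S \<Longrightarrow> comm S R"
  unfolding comm_def by (blast intro: sq_sym)

lemma comm_rtrancl: "comm R S \<Longrightarrow> comm (R\<^sup>*\<^sup>*) (S\<^sup>*\<^sup>*)"
  unfolding comm_def by (blast intro: sq_rtrancl sq_sym)

lemma comm_Un: "comm R T \<Longrightarrow> comm S T \<Longrightarrow> comm (sup R S) T"
  unfolding comm_def sq_def by blast

lemma diam_Un: "diam R \<Longrightarrow> diam S \<Longrightarrow> comm R S \<Longrightarrow> diam (sup R S)"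
  unfolding diam_def by (blast intro: comm_Un comm_sym)

lemma diam_confl: "diam R \<Longrightarrow> diam (R\<^sup>*\<^sup>*)"
  unfolding diam_def by (erule comm_rtrancl)

lemma sq_reflcl_confl: "sq R R (R\<^sup>=\<^sup>=) (R\<^sup>=\<^sup>=) \<Longrightarrow> diam (R\<^sup>*\<^sup>*)"
  unfolding diam_def by (fast intro: sq_rtrancl_reflcl_comm elim: sq_subset)

lemma confl_Un: "diam (R\<^sup>*\<^sup>*) \<Longrightarrow> diam (S\<^sup>*\<^sup>*) \<Longrightarrow> comm (R\<^sup>*\<^sup>*) (S\<^sup>*\<^sup>*) \<Longrightarrow> diam ((sup R S)\<^sup>*\<^sup>*)"
  apply (rule rtranclp_sup_rtranclp [THEN subst])
  apply (blast dest: diam_Un intro: diam_confl)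
  done

lemma diam_to_confl: "diam R \<Longrightarrow> T \<le> R \<Longrightarrow> R \<le> T\<^sup>*\<^sup>* \<Longrightarrow> diam (T\<^sup>*\<^sup>*)"
  by (force intro: diam_confl dest: rtranclp_subset [symmetric])

lemma confl_CR:
  assumes c: "diam (R\<^sup>*\<^sup>*)" and h: "(sup R R\<inverse>\<inverse>)\<^sup>*\<^sup>* x y"
  shows "\<exists>z. R\<^sup>*\<^sup>* x z \<and> R\<^sup>*\<^sup>* y z"
  using h
proof (induction rule: rtranclp_induct)
  case base then show ?case by blast
next
  case (step y w)
  then obtain z where xz: "R\<^sup>*\<^sup>* x z" and yz: "R\<^sup>*\<^sup>* y z" by blast
  from step(2) show ?case
  proof
    assume "R y w"
    then have "R\<^sup>*\<^sup>* y w" by blast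
    with yz c obtain u where "R\<^sup>*\<^sup>* z u" "R\<^sup>*\<^sup>* w u"
      unfolding diam_def comm_def sq_def by blast
    with xz show ?thesis by (blast intro: rtranclp_trans)
  next
    assume "R\<inverse>\<inverse> y w"
    then have "R w y" by simp
    with yz show ?thesis using xz by (blast intro: rtranclp_trans converse_rtranclp_into_rtranclp)
  qed
qed

inductive beta :: "dB \<Rightarrow> dB \<Rightarrow> bool" where
  beta [simp, intro!]: "beta (App (Abs s) t) (subst s t 0)"
| appL [simp, intro!]: "beta s t \<Longrightarrow> beta (App s u) (App t u)"
| appR [simp, intro!]: "beta s t \<Longrightarrow> beta (App u s) (App u t)"
| abs [simp, intro!]: "beta s t \<Longrightarrow> beta (Abs s) (Abs t)"

inductive_cases beta_cases [elim!]:
  "beta (Var i) t"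
  "beta (Abs r) s"
  "beta (App s t) u"

lemma subst_eq [simp]: "subst (Var k) u k = u"
  by simp

lemma subst_gt [simp]: "i < j \<Longrightarrow> subst (Var j) u i = Var (j - 1)"
  by simp

lemma subst_lt [simp]: "j < i \<Longrightarrow> subst (Var j) u i = Var j"
  by simp

declare subst.simps(1) [simp del]

lemma lift_lift:
    "i < k + 1 \<Longrightarrow> lift (lift t i) (Suc k) = lift (lift t k) i"
  by (induct t arbitrary: i k) auto

lemma lift_subst [simp]:
    "j < i + 1 \<Longrightarrow> lift (subst t s j) i = subst (lift t (i + 1)) (lift s i) j"
  by (induct t arbitrary: i j s)
    (simp_all add: diff_Suc subst.simps(1) lift_lift split: nat.split)

lemma lift_subst_lt:
    "i < j + 1 \<Longrightarrow> lift (subst t s j) i = subst (lift t i) (lift s i) (j + 1)"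
  apply (induct t arbitrary: i j s)
    apply (simp_all add: subst.simps(1) lift_lift)
  apply arith
  done

lemma subst_lift [simp]: "subst (lift t k) s k = t"
  by (induct t arbitrary: k s) (simp_all add: subst.simps(1))

lemma subst_subst:
    "i < j + 1 \<Longrightarrow> subst (subst t (lift v i) (Suc j)) (subst u v j) i = subst (subst t u i) v j"
  by (induct t arbitrary: i j u v)
    (simp_all add: diff_Suc subst.simps(1) lift_lift [symmetric] lift_subst_lt
      split: nat.split)

lemma rtrancl_beta_Abs: "beta\<^sup>*\<^sup>* s s' \<Longrightarrow> beta\<^sup>*\<^sup>* (Abs s) (Abs s')"
  by (induct set: rtranclp) (blast intro: rtranclp.rtrancl_into_rtrancl)+

lemma rtrancl_beta_AppL: "beta\<^sup>*\<^sup>* s s' \<Longrightarrow> beta\<^sup>*\<^sup>* (App s t) (App s' t)"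
  by (induct set: rtranclp) (blast intro: rtranclp.rtrancl_into_rtrancl)+

lemma rtrancl_beta_AppR: "beta\<^sup>*\<^sup>* t t' \<Longrightarrow> beta\<^sup>*\<^sup>* (App s t) (App s t')"
  by (induct set: rtranclp) (blast intro: rtranclp.rtrancl_into_rtrancl)+

lemma rtrancl_beta_App: "beta\<^sup>*\<^sup>* s s' \<Longrightarrow> beta\<^sup>*\<^sup>* t t' \<Longrightarrow> beta\<^sup>*\<^sup>* (App s t) (App s' t')"
  by (blast intro!: rtrancl_beta_AppL rtrancl_beta_AppR intro: rtranclp_trans)

inductive pb :: "dB \<Rightarrow> dB \<Rightarrow> bool" where
  var [simp, intro!]: "pb (Var n) (Var n)"
| abs [simp, intro!]: "pb s t \<Longrightarrow> pb (Abs s) (Abs t)"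
| app [simp, intro!]: "pb s s' \<Longrightarrow> pb t t' \<Longrightarrow> pb (App s t) (App s' t')"
| beta [simp, intro!]: "pb s s' \<Longrightarrow> pb t t' \<Longrightarrow> pb (App (Abs s) t) (subst s' t' 0)"

inductive_cases pb_cases [elim!]:
  "pb (Var n) t"
  "pb (Abs s) (Abs t)"
  "pb (App (Abs s) t) u"
  "pb (App s t) u"
  "pb (Abs s) t"

lemma pb_refl [simp]: "pb t t"
  by (induct t) simp_all

lemma beta_pb: "beta \<le> pb"
  apply (rule predicate2I)
  apply (erule beta.induct)
     apply (blast intro!: pb_refl)+
  done

lemma pb_beta1: "pb s t \<Longrightarrow> beta\<^sup>*\<^sup>* s t"
proof (induct rule: pb.induct)
  case (beta s s' t t')
  have "beta\<^sup>*\<^sup>* (App (Abs s) t) (App (Abs s') t')"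
    using beta by (simp add: rtrancl_beta_App rtrancl_beta_Abs)
  then show ?case by (rule rtranclp.rtrancl_into_rtrancl) simp
qed (simp_all add: rtrancl_beta_App rtrancl_beta_Abs)

lemma pb_beta: "pb \<le> beta\<^sup>*\<^sup>*"
  using pb_beta1 by blast

lemma pb_lift [simp]: "pb t t' \<Longrightarrow> pb (lift t n) (lift t' n)"
  by (induct arbitrary: n rule: pb.induct) simp_all

lemma pb_subst0: "pb t t' \<Longrightarrow> pb s s' \<Longrightarrow> pb (subst t s n) (subst t' s' n)"
proof (induct arbitrary: s s' n rule: pb.induct)
  case (var i) then show ?case by (simp add: subst.simps(1))
next
  case (beta a a' b b')
  then have "pb (App (Abs (subst a (lift s 0) (Suc n))) (subst b s n))
     (subst (subst a' (lift s' 0) (Suc n)) (subst b' s' n) 0)" by simp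
  then show ?case by (simp add: subst_subst [symmetric])
qed simp_all

lemma pb_subst: "pb s s' \<Longrightarrow> pb t t' \<Longrightarrow> pb (subst t s n) (subst t' s' n)"
  by (rule pb_subst0)

fun cd :: "dB \<Rightarrow> dB" where
  "cd (Var n) = Var n"
| "cd (App (Var n) t) = App (Var n) (cd t)"
| "cd (App (App s1 s2) t) = App (cd (App s1 s2)) (cd t)"
| "cd (App (Abs u) t) = subst (cd u) (cd t) 0"
| "cd (Abs s) = Abs (cd s)"

lemma pb_cd: "pb s t \<Longrightarrow> pb t (cd s)"
  apply (induct s arbitrary: t rule: cd.induct)
      apply auto
  apply (fast intro!: pb_subst)
  done

lemma diam_pb: "diam pb"
  unfolding diam_def comm_def sq_def by (blast intro: pb_cd)

lemma beta_confl: "diam (beta\<^sup>*\<^sup>*)"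
  by (rule diam_pb diam_to_confl beta_pb pb_beta)+



primrec free :: "dB \<Rightarrow> nat \<Rightarrow> bool" where
  "free (Var j) i = (j = i)"
| "free (App s t) i = (free s i \<or> free t i)"
| "free (Abs s) i = free s (i + 1)"

inductive eta :: "dB \<Rightarrow> dB \<Rightarrow> bool" where
  eta [simp, intro]: "\<not> free s 0 \<Longrightarrow> eta (Abs (App s (Var 0))) (subst s d 0)"
| appL [simp, intro]: "eta s t \<Longrightarrow> eta (App s u) (App t u)"
| appR [simp, intro]: "eta s t \<Longrightarrow> eta (App u s) (App u t)"
| abs [simp, intro]: "eta s t \<Longrightarrow> eta (Abs s) (Abs t)"

inductive_cases eta_cases [elim!]:
  "eta (Abs s) z"
  "eta (App s t) u"
  "eta (Var i) t"

lemma subst_not_free [simp]: "\<not> free s i \<Longrightarrow> subst s t i = subst s u i"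
  by (induct s arbitrary: i t u) (simp_all add: subst.simps(1))

lemma free_lift [simp]:
    "free (lift t k) i = (i < k \<and> free t i \<or> k < i \<and> free t (i - 1))"
  by (induct t arbitrary: i k) (auto cong: conj_cong)

lemma free_subst [simp]:
    "free (subst s t k) i =
      (free s k \<and> free t i \<or> free s (if i < k then i else i + 1))"
proof (induct s arbitrary: i k t)
  case (Var j) then show ?case by (auto simp add: subst.simps(1))
next
  case (App s1 s2) then show ?case by simp blast
next
  case (Abs s) then show ?case by simp
qed

lemma free_eta: "eta s t \<Longrightarrow> free t i = free s i"
  by (induct arbitrary: i set: eta) (simp_all cong: conj_cong)

lemma eta_subst [simp]: "eta s t \<Longrightarrow> eta (subst s u i) (subst t u i)"
  by (induct arbitrary: u i set: eta) (simp_all add: subst_subst [symmetric])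

lemma lift_subst_dummy: "\<not> free s i \<Longrightarrow> lift (subst s dummy i) i = s"
  by (induct s arbitrary: i dummy) (auto simp add: subst.simps(1))

lemma square_eta: "sq eta eta (eta\<^sup>=\<^sup>=) (eta\<^sup>=\<^sup>=)"
  apply (unfold sq_def id_def)
  apply (rule impI [THEN allI [THEN allI]])
  apply (erule eta.induct)
     apply (slowsimp intro: subst_not_free eta_subst free_eta [THEN iffD1])
    apply safe
       prefer 5
       apply (blast intro!: eta_subst intro: free_eta [THEN iffD1])
      apply blast+
  done

lemma eta_confl: "diam (eta\<^sup>*\<^sup>*)"
  by (rule square_eta [THEN sq_reflcl_confl])

lemma rtrancl_eta_Abs: "eta\<^sup>*\<^sup>* s s' \<Longrightarrow> eta\<^sup>*\<^sup>* (Abs s) (Abs s')"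
  by (induct set: rtranclp) (blast intro: rtranclp.rtrancl_into_rtrancl)+

lemma rtrancl_eta_AppL: "eta\<^sup>*\<^sup>* s s' \<Longrightarrow> eta\<^sup>*\<^sup>* (App s t) (App s' t)"
  by (induct set: rtranclp) (blast intro: rtranclp.rtrancl_into_rtrancl)+

lemma rtrancl_eta_AppR: "eta\<^sup>*\<^sup>* t t' \<Longrightarrow> eta\<^sup>*\<^sup>* (App s t) (App s t')"
  by (induct set: rtranclp) (blast intro: rtranclp.rtrancl_into_rtrancl)+

lemma rtrancl_eta_App: "eta\<^sup>*\<^sup>* s s' \<Longrightarrow> eta\<^sup>*\<^sup>* t t' \<Longrightarrow> eta\<^sup>*\<^sup>* (App s t) (App s' t')"
  by (blast intro!: rtrancl_eta_AppL rtrancl_eta_AppR intro: rtranclp_trans)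

lemma free_beta: "beta s t \<Longrightarrow> free t i \<Longrightarrow> free s i"
  by (induct arbitrary: i set: beta) auto

lemma beta_subst [intro]: "beta s t \<Longrightarrow> beta (subst s u i) (subst t u i)"
  by (induct arbitrary: u i set: beta) (simp_all add: subst_subst [symmetric])

lemma eta_lift [simp]: "eta s t \<Longrightarrow> eta (lift s i) (lift t i)"
  by (induct arbitrary: i set: eta) simp_all

lemma rtrancl_eta_subst: "eta s t \<Longrightarrow> eta\<^sup>*\<^sup>* (subst u s i) (subst u t i)"
  apply (induct u arbitrary: s t i)
    apply (simp_all add: subst.simps(1))
    apply blast
   apply (blast intro: rtrancl_eta_App)
  apply (blast intro!: rtrancl_eta_Abs eta_lift)
  done

lemma subst_Var_Suc: "subst t (Var i) i = subst t (Var i) (Suc i)"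
  by (induct t arbitrary: i) (auto elim!: linorder_neqE simp: subst.simps(1))

lemma W: "eta\<^sup>*\<^sup>* y u \<Longrightarrow> beta\<^sup>=\<^sup>= z u \<Longrightarrow> \<exists>u. eta\<^sup>*\<^sup>* y u \<and> beta\<^sup>=\<^sup>= z u"
  by blast

lemma beta_eta_step: "beta x y \<Longrightarrow> eta x z \<Longrightarrow> \<exists>u. eta\<^sup>*\<^sup>* y u \<and> beta\<^sup>=\<^sup>= z u"
proof (induct arbitrary: z rule: beta.induct)
  case (beta s t)
  from beta.prems show ?case
  proof (cases rule: eta_cases(2)[consumes 1, case_names c1 c2])
    case (c1 s2)
    from c1(2) show ?thesis
    proof (cases rule: eta_cases(1)[consumes 1, case_names d1 d2])
      case (d1 s0 d)
      then have "subst s t 0 = z" using \<open>z = App s2 t\<close> by simp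
      then show ?thesis by (intro W[of _ z]) (auto intro: r_into_rtranclp)
    next
      case (d2 s')
      then have "eta (subst s t 0) (subst s' t 0)" by simp
      moreover have "beta z (subst s' t 0)" using d2 \<open>z = App s2 t\<close> by simp
      ultimately show ?thesis by (intro W[of _ "subst s' t 0"]) (auto intro: r_into_rtranclp)
    qed
  next
    case (c2 t')
    then have "eta\<^sup>*\<^sup>* (subst s t 0) (subst s t' 0)" by (simp add: rtrancl_eta_subst)
    moreover have "beta z (subst s t' 0)" using c2 by simp
    ultimately show ?thesis by (intro W[of _ "subst s t' 0"]) (auto intro: r_into_rtranclp)
  qed
next
  case (appL s t u)
  from appL.prems show ?case
  proof (cases rule: eta_cases(2)[consumes 1, case_names c1 c2])
    case (c1 s')
    from appL.hyps(2)[OF c1(2)] obtain v where "eta\<^sup>*\<^sup>* t v" "beta\<^sup>=\<^sup>= s' v" by iprover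
    then have "eta\<^sup>*\<^sup>* (App t u) (App v u)" "beta\<^sup>=\<^sup>= (App s' u) (App v u)"
      by (auto intro: rtrancl_eta_AppL)
    then show ?thesis using c1 by (intro W[of _ "App v u"]) (auto intro: r_into_rtranclp)
  next
    case (c2 u')
    then have "eta (App t u) (App t u')" "beta (App s u') (App t u')" using appL.hyps(1) by simp_all
    then show ?thesis using c2 by (intro W[of _ "App t u'"]) (auto intro: r_into_rtranclp)
  qed
next
  case (appR s t u)
  from appR.prems show ?case
  proof (cases rule: eta_cases(2)[consumes 1, case_names c1 c2])
    case (c2 s')
    from appR.hyps(2)[OF c2(2)] obtain v where "eta\<^sup>*\<^sup>* t v" "beta\<^sup>=\<^sup>= s' v" by iprover
    then have "eta\<^sup>*\<^sup>* (App u t) (App u v)" "beta\<^sup>=\<^sup>= (App u s') (App u v)"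
      by (auto intro: rtrancl_eta_AppR)
    then show ?thesis using c2 by (intro W[of _ "App u v"]) (auto intro: r_into_rtranclp)
  next
    case (c1 u')
    then have "eta (App u t) (App u' t)" "beta (App u' s) (App u' t)" using appR.hyps(1) by simp_all
    then show ?thesis using c1 by (intro W[of _ "App u' t"]) (auto intro: r_into_rtranclp)
  qed
next
  case (abs s t)
  from abs.prems show ?case
  proof (cases rule: eta_cases(1)[consumes 1, case_names c1 c2])
    case (c1 s0 d)
    have bs: "beta (App s0 (Var 0)) t" using abs.hyps(1) c1 by simp
    then show ?thesis
    proof (cases rule: beta_cases(3)[consumes 1, case_names b1 b2 b3])
      case (b1 b)
      with c1 have nf: "\<not> free b (Suc 0)" by simp
      have "Abs t = Abs (subst b (Var 0) (Suc 0))" using b1 subst_Var_Suc[of b 0] by simp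
      also have "\<dots> = Abs (subst b (lift d 0) (Suc 0))" using subst_not_free[OF nf, of "Var 0" "lift d 0"] by simp
      also have "\<dots> = z" using \<open>z = subst s0 d 0\<close> \<open>s0 = Abs b\<close> by simp
      finally show ?thesis by (intro W[of _ z]) (auto intro: r_into_rtranclp)
    next
      case (b2 s0')
      have "\<not> free s0' 0" using \<open>\<not> free s0 0\<close> b2 free_beta by blast
      then have "eta (Abs t) (subst s0' d 0)" using b2 by simp
      moreover have "beta z (subst s0' d 0)" using b2 \<open>z = subst s0 d 0\<close> by (simp add: beta_subst)
      ultimately show ?thesis by (intro W[of _ "subst s0' d 0"]) (auto intro: r_into_rtranclp)
    next
      case (b3 t') then show ?thesis by (meson beta_cases(1))
    qed
  next
    case (c2 s')
    from abs.hyps(2)[OF c2(2)] obtain v where "eta\<^sup>*\<^sup>* t v" "beta\<^sup>=\<^sup>= s' v" by iprover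
    then have "eta\<^sup>*\<^sup>* (Abs t) (Abs v)" "beta\<^sup>=\<^sup>= (Abs s') (Abs v)"
      by (auto intro: rtrancl_eta_Abs)
    then show ?thesis using c2 by (intro W[of _ "Abs v"]) (auto intro: r_into_rtranclp)
  qed
qed

lemma square_beta_eta: "sq beta eta (eta\<^sup>*\<^sup>*) (beta\<^sup>=\<^sup>=)"
  unfolding sq_def using beta_eta_step by blast

lemma confluent_beta_eta: "diam ((sup beta eta)\<^sup>*\<^sup>*)"
  by (rule confl_Un[OF beta_confl eta_confl sq_rtrancl_reflcl_comm[OF square_beta_eta]])

lemma red1_sub: "red1 s t \<Longrightarrow> beta s t \<or> eta s t"
proof (induct rule: red1.induct)
  case (eta s)
  have "\<not> free (lift s 0) 0" by simp
  then have "eta (Abs (App (lift s 0) (Var 0))) (subst (lift s 0) (Var 0) 0)" by (rule eta.eta)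
  then show ?case by simp
qed auto

lemma beta_red1: "beta s t \<Longrightarrow> red1 s t"
  by (induct rule: beta.induct) (auto intro: red1.intros)

lemma eta_red1: "eta s t \<Longrightarrow> red1 s t"
proof (induct rule: eta.induct)
  case (eta s d)
  then have e: "s = lift (subst s d 0) 0" using lift_subst_dummy[of s 0 d] by metis
  have "red1 (Abs (App (lift (subst s d 0) 0) (Var 0))) (subst s d 0)" by (rule red1.eta)
  then show ?case using e by metis
qed (auto intro: red1.intros)

lemma red1_eq: "red1 = sup beta eta"
  using red1_sub beta_red1 eta_red1 by (auto simp: fun_eq_iff)

theorem CR_beta_eta:
  assumes "beta_eta_conv s t"
  shows "\<exists>w. red1\<^sup>*\<^sup>* s w \<and> red1\<^sup>*\<^sup>* t w"
  using confl_CR[OF confluent_beta_eta] assms unfolding beta_eta_conv_def red1_eq by blast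



section \<open>Digit encoding\<close>

definition ap :: "nat \<Rightarrow> nat \<Rightarrow> nat \<Rightarrow> nat" where
  "ap b f x = f div b ^ x mod b"

primrec enc :: "nat \<Rightarrow> nat \<Rightarrow> (nat \<Rightarrow> nat) \<Rightarrow> nat" where
  "enc b 0 h = 0"
| "enc b (Suc n) h = h 0 + b * enc b n (\<lambda>x. h (Suc x))"

lemma enc_bound: "(\<forall>x<n. h x < b) \<Longrightarrow> enc b n h < b ^ n"
proof (induct n arbitrary: h)
  case 0 then show ?case by simp
next
  case (Suc n)
  define e where "e = enc b n (\<lambda>x. h (Suc x))"
  have "e < b ^ n" using Suc unfolding e_def by auto
  then have "e + 1 \<le> b ^ n" by simp
  then have "b * (e + 1) \<le> b * b ^ n" by (rule mult_le_mono2)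
  moreover have "h 0 < b" using Suc by auto
  moreover have "b * (e + 1) = b + b * e" by simp
  ultimately have "h 0 + b * e < b ^ Suc n" by simp
  then show ?case unfolding e_def by simp
qed

lemma ap_lt: "0 < b \<Longrightarrow> ap b f x < b"
  by (simp add: ap_def)

lemma ap_enc: "(\<forall>x<n. h x < b) \<Longrightarrow> x < n \<Longrightarrow> ap b (enc b n h) x = h x"
proof (induct n arbitrary: h x)
  case 0 then show ?case by simp
next
  case (Suc n)
  have hb: "h 0 < b" using Suc by auto
  show ?case
  proof (cases x)
    case 0 then show ?thesis using hb by (simp add: ap_def)
  next
    case (Suc y)
    have d: "(h 0 + b * enc b n (\<lambda>x. h (Suc x))) div b = enc b n (\<lambda>x. h (Suc x))"
      using hb by simp
    have "ap b (enc b (Suc n) h) x = ap b (enc b n (\<lambda>x. h (Suc x))) y"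
      unfolding ap_def using Suc d by (simp add: div_mult2_eq)
    also have "\<dots> = h x" using Suc.hyps[of "\<lambda>x. h (Suc x)" y] Suc.prems \<open>x = Suc y\<close> by auto
    finally show ?thesis .
  qed
qed

lemma ap_Suc: "ap b f (Suc x) = ap b (f div b) x"
  unfolding ap_def by (simp add: div_mult2_eq)

lemma enc_ap: "0 < b \<Longrightarrow> f < b ^ n \<Longrightarrow> enc b n (\<lambda>x. ap b f x) = f"
proof (induct n arbitrary: f)
  case 0 then show ?case by simp
next
  case (Suc n)
  have "f < b ^ n * b" using Suc.prems by (simp add: ac_simps)
  then have "f div b < b ^ n" by (simp add: less_mult_imp_div_less)
  then have "enc b n (\<lambda>x. ap b (f div b) x) = f div b" using Suc by simp
  moreover have "ap b f 0 = f mod b" by (simp add: ap_def)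
  ultimately have "enc b (Suc n) (\<lambda>x. ap b f x) = f mod b + b * (f div b)"
    by (simp add: ap_Suc)
  then show ?case by simp
qed

lemma enc_cong: "(\<And>x. x < n \<Longrightarrow> h x = h' x) \<Longrightarrow> enc b n h = enc b n h'"
proof (induct n arbitrary: h h')
  case 0 then show ?case by simp
next
  case (Suc n)
  have "h 0 = h' 0" using Suc.prems by simp
  moreover have "enc b n (\<lambda>x. h (Suc x)) = enc b n (\<lambda>x. h' (Suc x))"
    by (rule Suc.hyps) (simp add: Suc.prems)
  ultimately show ?case by simp
qed

datatype aterm = AVar nat | AApp aterm aterm stype | AAbs stype aterm stype

primrec erase :: "aterm \<Rightarrow> dB" where
  "erase (AVar i) = Var i"
| "erase (AApp s t U) = App (erase s) (erase t)"
| "erase (AAbs T s U) = Abs (erase s)"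

primrec alift :: "aterm \<Rightarrow> nat \<Rightarrow> aterm" where
  "alift (AVar i) k = (if i < k then AVar i else AVar (Suc i))"
| "alift (AApp s t U) k = AApp (alift s k) (alift t k) U"
| "alift (AAbs T s U) k = AAbs T (alift s (Suc k)) U"

primrec asubst :: "aterm \<Rightarrow> aterm \<Rightarrow> nat \<Rightarrow> aterm" where
  "asubst (AVar i) s k = (if k < i then AVar (i - 1) else if i = k then s else AVar i)"
| "asubst (AApp t u U) s k = AApp (asubst t s k) (asubst u s k) U"
| "asubst (AAbs T t U) s k = AAbs T (asubst t (alift s 0) (Suc k)) U"

lemma erase_alift [simp]: "erase (alift a k) = lift (erase a) k"
  by (induct a arbitrary: k) simp_all

lemma erase_asubst [simp]: "erase (asubst a b k) = subst (erase a) (erase b) k"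
  by (induct a arbitrary: b k) (simp_all add: subst.simps(1))

inductive aty :: "stype list \<Rightarrow> aterm \<Rightarrow> stype \<Rightarrow> bool" where
  avar: "i < length \<Gamma> \<Longrightarrow> \<Gamma> ! i = T \<Longrightarrow> aty \<Gamma> (AVar i) T"
| aapp: "aty \<Gamma> s (Fun T U) \<Longrightarrow> aty \<Gamma> t T \<Longrightarrow> aty \<Gamma> (AApp s t U) U"
| aabs: "aty (T # \<Gamma>) s U \<Longrightarrow> aty \<Gamma> (AAbs T s U) (Fun T U)"

inductive_cases aty_cases:
  "aty \<Gamma> (AVar i) T"
  "aty \<Gamma> (AApp s t U) V"
  "aty \<Gamma> (AAbs T s U) V"

lemma typing_aty: "typing \<Gamma> t T \<Longrightarrow> \<exists>a. erase a = t \<and> aty \<Gamma> a T"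
proof (induct rule: typing.induct)
  case (var i \<Gamma> T)
  then show ?case by (intro exI[of _ "AVar i"]) (auto intro: aty.intros)
next
  case (app \<Gamma> s T U t)
  then obtain a b where "erase a = s" "aty \<Gamma> a (Fun T U)" "erase b = t" "aty \<Gamma> b T" by blast
  then show ?case by (intro exI[of _ "AApp a b U"]) (auto intro: aty.intros)
next
  case (abs T \<Gamma> t U)
  then obtain a where "erase a = t" "aty (T # \<Gamma>) a U" by blast
  then show ?case by (intro exI[of _ "AAbs T a U"]) (auto intro: aty.intros)
qed

definition insl :: "nat \<Rightarrow> stype \<Rightarrow> stype list \<Rightarrow> stype list" where
  "insl k U \<Gamma> = take k \<Gamma> @ U # drop k \<Gamma>"

lemma insl_length [simp]: "k \<le> length \<Gamma> \<Longrightarrow> length (insl k U \<Gamma>) = Suc (length \<Gamma>)"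
  unfolding insl_def by simp

lemma insl_nth_lt: "k \<le> length \<Gamma> \<Longrightarrow> i < k \<Longrightarrow> insl k U \<Gamma> ! i = \<Gamma> ! i"
  unfolding insl_def by (simp add: nth_append)

lemma insl_nth_eq: "k \<le> length \<Gamma> \<Longrightarrow> insl k U \<Gamma> ! k = U"
  unfolding insl_def by (simp add: nth_append)

lemma insl_nth_gt: "k \<le> length \<Gamma> \<Longrightarrow> k < i \<Longrightarrow> insl k U \<Gamma> ! i = \<Gamma> ! (i - 1)"
  unfolding insl_def by (cases i) (auto simp add: nth_append min_def)

lemma insl_Cons: "T # insl k U \<Gamma> = insl (Suc k) U (T # \<Gamma>)"
  unfolding insl_def by simp

lemma insl_0: "insl 0 U \<Gamma> = U # \<Gamma>"
  unfolding insl_def by simp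

lemma aty_lift: "aty \<Gamma> a T \<Longrightarrow> k \<le> length \<Gamma> \<Longrightarrow> aty (insl k V \<Gamma>) (alift a k) T"
proof (induct arbitrary: k rule: aty.induct)
  case (avar i \<Gamma> T)
  show ?case
  proof (cases "i < k")
    case True then show ?thesis using avar by (auto intro!: aty.avar simp: insl_nth_lt)
  next
    case False then show ?thesis using avar by (auto intro!: aty.avar simp: insl_nth_gt)
  qed
next
  case (aapp \<Gamma> s T U t) then show ?case by (auto intro: aty.aapp)
next
  case (aabs T \<Gamma> s U)
  have "aty (insl (Suc k) V (T # \<Gamma>)) (alift s (Suc k)) U"
    using aabs by simp
  then show ?case by (auto intro!: aty.aabs simp: insl_Cons)
qed

lemma aty_unlift: "aty \<Gamma>' b T \<Longrightarrow> b = alift a k \<Longrightarrow> \<Gamma>' = insl k V \<Gamma> \<Longrightarrow> k \<le> length \<Gamma> \<Longrightarrow> aty \<Gamma> a T"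
proof (induct arbitrary: a k \<Gamma> rule: aty.induct)
  case (avar i \<Gamma>' T)
  then obtain j where a: "a = AVar j" by (cases a) (auto split: if_splits)
  show ?case
  proof (cases "j < k")
    case True then show ?thesis using avar a by (auto intro!: aty.avar simp: insl_nth_lt)
  next
    case False
    then have "i = Suc j" using avar a by auto
    then show ?thesis using avar a False by (auto intro!: aty.avar simp: insl_nth_gt)
  qed
next
  case (aapp \<Gamma>' s T U t)
  then obtain s0 t0 where "a = AApp s0 t0 U" "s = alift s0 k" "t = alift t0 k" by (cases a) (auto split: if_splits)
  moreover have "aty \<Gamma> s0 (Fun T U)" using aapp.hyps(2)[of s0 k \<Gamma>] aapp.prems calculation by simp
  moreover have "aty \<Gamma> t0 T" using aapp.hyps(4)[of t0 k \<Gamma>] aapp.prems calculation by simp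
  ultimately show ?case by (auto intro: aty.aapp)
next
  case (aabs T \<Gamma>' s U)
  then obtain s0 where "a = AAbs T s0 U" "s = alift s0 (Suc k)" by (cases a) (auto split: if_splits)
  then show ?case using aabs by (auto intro!: aty.aabs simp: insl_Cons)
qed

lemma aty_subst: "aty \<Gamma>' a T \<Longrightarrow> \<Gamma>' = insl k V \<Gamma> \<Longrightarrow> aty \<Gamma> b V \<Longrightarrow> k \<le> length \<Gamma> \<Longrightarrow> aty \<Gamma> (asubst a b k) T"
proof (induct arbitrary: k \<Gamma> b rule: aty.induct)
  case (avar i \<Gamma>' T)
  show ?case
  proof (cases "k < i")
    case True
    then show ?thesis using avar by (auto intro!: aty.avar simp: insl_nth_gt)
  next
    case False
    show ?thesis
    proof (cases "i = k")
      case True then show ?thesis using avar by (simp add: insl_nth_eq)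
    next
      case False
      then have "i < k" using \<open>\<not> k < i\<close> by simp
      then show ?thesis using avar by (auto intro!: aty.avar simp: insl_nth_lt)
    qed
  qed
next
  case (aapp \<Gamma>' s T U t)
  have "aty \<Gamma> (asubst s b k) (Fun T U)" using aapp.hyps(2)[of k \<Gamma> b] aapp.prems by simp
  moreover have "aty \<Gamma> (asubst t b k) T" using aapp.hyps(4)[of k \<Gamma> b] aapp.prems by simp
  ultimately show ?case by (auto intro: aty.aapp)
next
  case (aabs T \<Gamma>' s U')
  have "aty (insl 0 T \<Gamma>) (alift b 0) V" using aabs.prems by (intro aty_lift) auto
  then have "aty (T # \<Gamma>) (asubst s (alift b 0) (Suc k)) U'"
    using aabs by (auto simp: insl_Cons insl_0)
  then show ?case by (auto intro: aty.aabs)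
qed

section \<open>Evaluation in the finite full type hierarchy\<close>

primrec sz :: "stype \<Rightarrow> nat" where
  "sz stype.O = 2"
| "sz (Fun T U) = sz U ^ sz T"

lemma sz_ge2: "2 \<le> sz T"
proof (induct T)
  case O then show ?case by simp
next
  case (Fun T U)
  have "sz U ^ 1 \<le> sz U ^ sz T" using Fun by (intro power_increasing) auto
  then show ?case using Fun by simp
qed

lemma sz_pos: "0 < sz T"
  using sz_ge2[of T] by simp

primrec eval :: "(nat \<Rightarrow> nat) \<Rightarrow> aterm \<Rightarrow> nat" where
  "eval \<rho> (AVar i) = \<rho> i"
| "eval \<rho> (AApp s t U) = ap (sz U) (eval \<rho> s) (eval \<rho> t)"
| "eval \<rho> (AAbs T s U) = enc (sz U) (sz T) (\<lambda>x. eval (case_nat x \<rho>) s)"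

definition ins :: "nat \<Rightarrow> nat \<Rightarrow> (nat \<Rightarrow> nat) \<Rightarrow> nat \<Rightarrow> nat" where
  "ins k x \<rho> = (\<lambda>i. if i < k then \<rho> i else if i = k then x else \<rho> (i - 1))"

lemma ins_0: "ins 0 x \<rho> = case_nat x \<rho>"
  by (auto simp: ins_def fun_eq_iff split: nat.split)

lemma ins_Suc: "case_nat y (ins k x \<rho>) = ins (Suc k) x (case_nat y \<rho>)"
  by (auto simp: ins_def fun_eq_iff split: nat.split)

lemma eval_alift: "eval (ins k x \<rho>) (alift a k) = eval \<rho> a"
proof (induct a arbitrary: k \<rho>)
  case (AVar i) then show ?case by (simp add: ins_def)
next
  case (AApp s t U) then show ?case by simp
next
  case (AAbs T s U) then show ?case by (simp add: ins_Suc)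
qed

lemma eval_asubst: "eval \<rho> (asubst a b k) = eval (ins k (eval \<rho> b) \<rho>) a"
proof (induct a arbitrary: b k \<rho>)
  case (AVar i) then show ?case by (simp add: ins_def)
next
  case (AApp s t U) then show ?case by simp
next
  case (AAbs T s U)
  have "eval (case_nat y \<rho>) (asubst s (alift b 0) (Suc k)) =
        eval (case_nat y (ins k (eval \<rho> b) \<rho>)) s" for y
  proof -
    have "eval (case_nat y \<rho>) (alift b 0) = eval \<rho> b"
      using eval_alift[of 0 y \<rho> b] by (simp add: ins_0)
    then show ?thesis using AAbs by (simp add: ins_Suc)
  qed
  then show ?case by simp
qed

definition valid :: "stype list \<Rightarrow> (nat \<Rightarrow> nat) \<Rightarrow> bool" where
  "valid \<Gamma> \<rho> = (\<forall>i<length \<Gamma>. \<rho> i < sz (\<Gamma> ! i))"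

lemma valid_Cons: "valid \<Gamma> \<rho> \<Longrightarrow> x < sz T \<Longrightarrow> valid (T # \<Gamma>) (case_nat x \<rho>)"
  unfolding valid_def by (auto split: nat.split simp: nth_Cons')

lemma eval_bound: "aty \<Gamma> a T \<Longrightarrow> valid \<Gamma> \<rho> \<Longrightarrow> eval \<rho> a < sz T"
proof (induct arbitrary: \<rho> rule: aty.induct)
  case (avar i \<Gamma> T) then show ?case by (auto simp: valid_def)
next
  case (aapp \<Gamma> s T U t) then show ?case by (simp add: ap_lt sz_pos)
next
  case (aabs T \<Gamma> s U)
  then show ?case by (simp add: enc_bound valid_Cons)
qed

lemma erase_lift_inv: "erase b = lift s k \<Longrightarrow> \<exists>a'. b = alift a' k \<and> erase a' = s"
proof (induct b arbitrary: s k)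
  case (AVar i)
  then obtain j where s: "s = Var j" by (cases s) (auto split: if_splits)
  show ?case
  proof (cases "j < k")
    case True then show ?thesis using AVar s by (intro exI[of _ "AVar j"]) auto
  next
    case False then show ?thesis using AVar s by (intro exI[of _ "AVar j"]) auto
  qed
next
  case (AApp b1 b2 U)
  then obtain s1 s2 where s: "s = App s1 s2" "erase b1 = lift s1 k" "erase b2 = lift s2 k" by (cases s) (auto split: if_splits)
  with AApp obtain a1 a2 where "b1 = alift a1 k" "erase a1 = s1" "b2 = alift a2 k" "erase a2 = s2" by metis
  then show ?case using s by (intro exI[of _ "AApp a1 a2 U"]) auto
next
  case (AAbs T b U)
  then obtain s1 where s: "s = Abs s1" "erase b = lift s1 (Suc k)" by (cases s) (auto split: if_splits)
  with AAbs obtain a1 where "b = alift a1 (Suc k)" "erase a1 = s1" by metis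
  then show ?case using s by (intro exI[of _ "AAbs T a1 U"]) auto
qed

lemma erase_App: "erase a = App s t \<Longrightarrow> \<exists>a1 a2 U. a = AApp a1 a2 U \<and> erase a1 = s \<and> erase a2 = t"
  by (cases a) auto

lemma erase_Abs: "erase a = Abs s \<Longrightarrow> \<exists>T b U. a = AAbs T b U \<and> erase b = s"
  by (cases a) auto

lemma erase_Var: "erase a = Var i \<Longrightarrow> a = AVar i"
  by (cases a) auto

lemma red1_pres:
  "red1 t t' \<Longrightarrow> erase a = t \<Longrightarrow> aty \<Gamma> a T \<Longrightarrow>
   \<exists>a'. erase a' = t' \<and> aty \<Gamma> a' T \<and> (\<forall>\<rho>. valid \<Gamma> \<rho> \<longrightarrow> eval \<rho> a' = eval \<rho> a)"
proof (induct arbitrary: a \<Gamma> T rule: red1.induct)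
  case (beta s t)
  from erase_App[OF beta(1)] obtain a1 a2 U where a: "a = AApp a1 a2 U" "erase a1 = Abs s" "erase a2 = t" by blast
  from erase_Abs[OF a(2)] obtain T1 b U1 where a1: "a1 = AAbs T1 b U1" "erase b = s" by blast
  from beta(2) a obtain T2 where ty: "T = U" "aty \<Gamma> a1 (Fun T2 U)" "aty \<Gamma> a2 T2"
    by (auto elim: aty_cases)
  from ty(2) a1 have tb: "T1 = T2" "U1 = U" "aty (T1 # \<Gamma>) b U1" by (auto elim: aty_cases)
  define a' where "a' = asubst b a2 0"
  have "erase a' = subst s t 0" using a a1 by (simp add: a'_def)
  moreover have "aty \<Gamma> a' T"
    using aty_subst[OF tb(3), of 0 T1 \<Gamma> a2] ty tb by (simp add: insl_0 a'_def)
  moreover have "eval \<rho> a' = eval \<rho> a" if v: "valid \<Gamma> \<rho>" for \<rho>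
  proof -
    have b1: "eval \<rho> a2 < sz T1" using eval_bound[OF ty(3) v] tb by simp
    have b2: "\<forall>x<sz T1. eval (case_nat x \<rho>) b < sz U"
      using eval_bound[OF tb(3)] valid_Cons[OF v] tb by auto
    have "eval \<rho> a = eval (case_nat (eval \<rho> a2) \<rho>) b"
      using a a1 tb ap_enc[OF b2 b1] by simp
    then show ?thesis by (simp add: a'_def eval_asubst ins_0)
  qed
  ultimately show ?case by blast
next
  case (eta s)
  from erase_Abs[OF eta(1)] obtain T1 c U1 where a: "a = AAbs T1 c U1" "erase c = App (lift s 0) (Var 0)" by blast
  from erase_App[OF a(2)] obtain b v U2 where c: "c = AApp b v U2" "erase b = lift s 0" "erase v = Var 0" by blast
  from erase_Var[OF c(3)] have v: "v = AVar 0" .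
  from erase_lift_inv[OF c(2)] obtain a0 where a0: "b = alift a0 0" "erase a0 = s" by blast
  from eta(2) a have ty: "T = Fun T1 U1" "aty (T1 # \<Gamma>) c U1" by (auto elim: aty_cases)
  from ty(2) c v obtain T3 where ty2: "U2 = U1" "aty (T1 # \<Gamma>) b (Fun T3 U1)" "aty (T1 # \<Gamma>) (AVar 0) T3"
    by (auto elim: aty_cases)
  from ty2(3) have "T3 = T1" by (auto elim: aty_cases)
  have ta0: "aty \<Gamma> a0 (Fun T1 U1)"
    by (rule aty_unlift[OF ty2(2)[unfolded \<open>T3 = T1\<close>] a0(1), of T1]) (auto simp: insl_0)
  moreover have "eval \<rho> a0 = eval \<rho> a" if vl: "valid \<Gamma> \<rho>" for \<rho>
  proof -
    have "eval (case_nat x \<rho>) (alift a0 0) = eval \<rho> a0" for x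
      using eval_alift[of 0 x \<rho> a0] by (simp add: ins_0)
    then have "eval \<rho> a = enc (sz U1) (sz T1) (\<lambda>x. ap (sz U1) (eval \<rho> a0) x)"
      using a c v a0 ty2 by simp
    also have "\<dots> = eval \<rho> a0"
      using enc_ap[OF sz_pos] eval_bound[OF ta0 vl] by simp
    finally show ?thesis by simp
  qed
  ultimately show ?case using a0 ty by blast
next
  case (appL s t u)
  from erase_App[OF appL(3)] obtain a1 a2 U where a: "a = AApp a1 a2 U" "erase a1 = s" "erase a2 = u" by blast
  from appL(4) a obtain T2 where ty: "T = U" "aty \<Gamma> a1 (Fun T2 U)" "aty \<Gamma> a2 T2"
    by (auto elim: aty_cases)
  from appL(2)[OF a(2) ty(2)] obtain a1' where h: "erase a1' = t" "aty \<Gamma> a1' (Fun T2 U)"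
    "\<forall>\<rho>. valid \<Gamma> \<rho> \<longrightarrow> eval \<rho> a1' = eval \<rho> a1" by blast
  show ?case
    by (rule exI[of _ "AApp a1' a2 U"]) (use a ty h in \<open>auto intro: aty.aapp\<close>)
next
  case (appR s t u)
  from erase_App[OF appR(3)] obtain a1 a2 U where a: "a = AApp a1 a2 U" "erase a1 = u" "erase a2 = s" by blast
  from appR(4) a obtain T2 where ty: "T = U" "aty \<Gamma> a1 (Fun T2 U)" "aty \<Gamma> a2 T2"
    by (auto elim: aty_cases)
  from appR(2)[OF a(3) ty(3)] obtain a2' where h: "erase a2' = t" "aty \<Gamma> a2' T2"
    "\<forall>\<rho>. valid \<Gamma> \<rho> \<longrightarrow> eval \<rho> a2' = eval \<rho> a2" by blast
  show ?case
    by (rule exI[of _ "AApp a1 a2' U"]) (use a ty h in \<open>auto intro: aty.aapp\<close>)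
next
  case (abs s t)
  from erase_Abs[OF abs(3)] obtain T1 b U where a: "a = AAbs T1 b U" "erase b = s" by blast
  from abs(4) a have ty: "T = Fun T1 U" "aty (T1 # \<Gamma>) b U" by (auto elim: aty_cases)
  from abs(2)[OF a(2) ty(2)] obtain b' where h: "erase b' = t" "aty (T1 # \<Gamma>) b' U"
    "\<forall>\<rho>. valid (T1 # \<Gamma>) \<rho> \<longrightarrow> eval \<rho> b' = eval \<rho> b" by blast
  have "eval \<rho> (AAbs T1 b' U) = eval \<rho> a" if v: "valid \<Gamma> \<rho>" for \<rho>
    using a h(3) valid_Cons[OF v] by (auto intro!: enc_cong)
  then show ?case
    by (intro exI[of _ "AAbs T1 b' U"]) (use a ty h in \<open>auto intro: aty.aabs\<close>)
qed

lemma reds_pres: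
  "red1\<^sup>*\<^sup>* t t' \<Longrightarrow> erase a = t \<Longrightarrow> aty \<Gamma> a T \<Longrightarrow>
   \<exists>a'. erase a' = t' \<and> aty \<Gamma> a' T \<and> (\<forall>\<rho>. valid \<Gamma> \<rho> \<longrightarrow> eval \<rho> a' = eval \<rho> a)"
proof (induct arbitrary: a rule: rtranclp_induct)
  case base then show ?case by blast
next
  case (step y z)
  from step(3)[OF step(4,5)] obtain a1 where h: "erase a1 = y" "aty \<Gamma> a1 T"
    "\<forall>\<rho>. valid \<Gamma> \<rho> \<longrightarrow> eval \<rho> a1 = eval \<rho> a" by blast
  from red1_pres[OF step(2) h(1,2)] obtain a2 where "erase a2 = z" "aty \<Gamma> a2 T"
    "\<forall>\<rho>. valid \<Gamma> \<rho> \<longrightarrow> eval \<rho> a2 = eval \<rho> a1" by blast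
  then show ?case using h by auto
qed



definition achb :: "stype \<Rightarrow> nat \<Rightarrow> aterm" where
  "achb \<tau> n = ((\<lambda>a. AApp (AVar 1) a \<tau>) ^^ n) (AVar 0)"

definition ach :: "stype \<Rightarrow> nat \<Rightarrow> aterm" where
  "ach \<tau> n = AAbs (Fun \<tau> \<tau>) (AAbs \<tau> (achb \<tau> n) \<tau>) (Fun \<tau> \<tau>)"

lemma achb_Suc: "achb \<tau> (Suc n) = AApp (AVar 1) (achb \<tau> n) \<tau>"
  by (simp add: achb_def)

lemma achb_0: "achb \<tau> 0 = AVar 0"
  by (simp add: achb_def)

lemma chb_Suc: "(App (Var 1) ^^ Suc n) (Var 0) = App (Var 1) ((App (Var 1) ^^ n) (Var 0))"
  by simp

lemma erase_achb: "erase (achb \<tau> n) = (App (Var 1) ^^ n) (Var 0)"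
  by (induct n) (simp_all add: achb_Suc achb_0)

lemma erase_ach: "erase (ach \<tau> n) = church n"
  by (simp add: ach_def church_def erase_achb)

lemma aty_achb: "aty [\<tau>, Fun \<tau> \<tau>] (achb \<tau> n) \<tau>"
proof (induct n)
  case 0 then show ?case by (auto simp: achb_0 intro: aty.avar)
next
  case (Suc n)
  have "aty [\<tau>, Fun \<tau> \<tau>] (AVar 1) (Fun \<tau> \<tau>)" by (auto intro: aty.avar)
  then show ?case using Suc by (auto simp: achb_Suc intro: aty.aapp)
qed

lemma aty_ach: "aty [] (ach \<tau> n) (omega \<tau>)"
  unfolding ach_def omega_def by (intro aty.aabs aty_achb)

lemma achb_unique: "aty [\<tau>, Fun \<tau> \<tau>] b \<tau> \<Longrightarrow> erase b = (App (Var 1) ^^ n) (Var 0) \<Longrightarrow> b = achb \<tau> n"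
proof (induct n arbitrary: b)
  case 0 then show ?case by (simp add: achb_0 erase_Var)
next
  case (Suc n)
  from erase_App[OF Suc.prems(2)[unfolded chb_Suc]] obtain b1 b2 U where
    b: "b = AApp b1 b2 U" "erase b1 = Var 1" "erase b2 = (App (Var 1) ^^ n) (Var 0)" by blast
  from erase_Var[OF b(2)] have b1: "b1 = AVar 1" .
  from Suc.prems(1) b b1 obtain T2 where "U = \<tau>" "aty [\<tau>, Fun \<tau> \<tau>] (AVar 1) (Fun T2 \<tau>)"
    "aty [\<tau>, Fun \<tau> \<tau>] b2 T2" by (auto elim: aty_cases)
  moreover then have "T2 = \<tau>" by (auto elim: aty_cases)
  ultimately show ?case using Suc.hyps b b1 by (simp add: achb_Suc)
qed

lemma ach_unique: "aty [] a (omega \<tau>) \<Longrightarrow> erase a = church n \<Longrightarrow> a = ach \<tau> n"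
proof -
  assume ty: "aty [] a (omega \<tau>)" and e: "erase a = church n"
  from erase_Abs[OF e[unfolded church_def]] obtain T1 a1 U1 where
    a: "a = AAbs T1 a1 U1" "erase a1 = Abs ((App (Var 1) ^^ n) (Var 0))" by blast
  from erase_Abs[OF a(2)] obtain T2 b U2 where a1: "a1 = AAbs T2 b U2" "erase b = (App (Var 1) ^^ n) (Var 0)" by blast
  from ty a have t1: "T1 = Fun \<tau> \<tau>" "U1 = Fun \<tau> \<tau>" "aty [Fun \<tau> \<tau>] a1 (Fun \<tau> \<tau>)"
    by (auto simp: omega_def elim: aty_cases)
  from t1(3) a1 have "T2 = \<tau>" "U2 = \<tau>" "aty [\<tau>, Fun \<tau> \<tau>] b \<tau>" by (auto elim: aty_cases)
  with achb_unique a1 have "b = achb \<tau> n" by blast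
  then show ?thesis using a a1 t1 \<open>T2 = \<tau>\<close> \<open>U2 = \<tau>\<close> by (simp add: ach_def)
qed

lemma id_unique: "aty [] a (omega \<tau>) \<Longrightarrow> erase a = Abs (Var 0) \<Longrightarrow> a = AAbs (Fun \<tau> \<tau>) (AVar 0) (Fun \<tau> \<tau>)"
proof -
  assume ty: "aty [] a (omega \<tau>)" and e: "erase a = Abs (Var 0)"
  from erase_Abs[OF e] obtain T1 a1 U1 where a: "a = AAbs T1 a1 U1" "erase a1 = Var 0" by blast
  then have "a1 = AVar 0" by (simp add: erase_Var)
  with ty a show ?thesis by (auto simp: omega_def elim: aty_cases)
qed

inductive_cases red1_cases:
  "red1 (Var i) w"
  "red1 (App s t) w"
  "red1 (Abs s) w"

lemma no_red_var: "\<not> red1 (Var i) w"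
  by (auto elim: red1_cases)

lemma no_red_chb: "\<not> red1 ((App (Var 1) ^^ n) (Var 0)) w"
proof (induct n arbitrary: w)
  case 0 then show ?case by (simp add: no_red_var)
next
  case (Suc n)
  show ?case
  proof
    assume "red1 ((App (Var 1) ^^ Suc n) (Var 0)) w"
    then have "red1 (App (Var 1) ((App (Var 1) ^^ n) (Var 0))) w" by simp
    then show False using Suc no_red_var by (auto elim: red1_cases)
  qed
qed

lemma chb_Var: "(App (Var 1) ^^ m) (Var 0) = Var 0 \<Longrightarrow> m = 0"
  by (cases m) auto

lemma lift_Var1: "lift s 0 = Var 1 \<Longrightarrow> s = Var 0"
  by (cases s) (auto split: if_splits)

lemma red_church: "red1 (church n) w \<Longrightarrow> n = 1 \<and> w = Abs (Var 0)"
proof -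
  assume r: "red1 (church n) w"
  then have "red1 (Abs (Abs ((App (Var 1) ^^ n) (Var 0)))) w" by (simp add: church_def)
  then obtain w1 where w: "w = Abs w1" "red1 (Abs ((App (Var 1) ^^ n) (Var 0))) w1"
    by (auto elim: red1_cases)
  from w(2) show ?thesis
  proof (cases rule: red1_cases(3)[consumes 1, case_names e a])
    case e
    then obtain m where m: "n = Suc m" by (cases n) auto
    with e have "lift w1 0 = Var 1" "(App (Var 1) ^^ m) (Var 0) = Var 0" by auto
    then have "w1 = Var 0" "m = 0" using lift_Var1[of w1] chb_Var[of m] by simp_all
    then show ?thesis using m e w by simp
  next
    case (a t) then show ?thesis using no_red_chb by blast
  qed
qed

lemma red_id: "\<not> red1 (Abs (Var 0)) w"
proof
  assume "red1 (Abs (Var 0)) w"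
  then show False
    by (cases rule: red1_cases(3)[consumes 1, case_names e a]) (auto simp: no_red_var)
qed

lemma reds_church: "red1\<^sup>*\<^sup>* (church n) w \<Longrightarrow> w = church n \<or> (n = 1 \<and> w = Abs (Var 0))"
proof (induct rule: rtranclp_induct)
  case base then show ?case by simp
next
  case (step y z)
  then show ?case using red_church red_id by blast
qed

definition \<rho>0 :: "nat \<Rightarrow> nat" where "\<rho>0 = (\<lambda>_. 0)"

definition cv :: "stype \<Rightarrow> nat \<Rightarrow> nat" where
  "cv \<tau> n = eval \<rho>0 (ach \<tau> n)"

lemma valid_nil: "valid [] \<rho>" by (simp add: valid_def)

lemma eval_achb: "eval (case_nat x (case_nat g \<rho>)) (achb \<tau> m) = (ap (sz \<tau>) g ^^ m) x"
  by (induct m) (simp_all add: achb_0 achb_Suc)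

lemma cv_eq: "cv \<tau> m = enc (sz \<tau> ^ sz \<tau>) (sz \<tau> ^ sz \<tau>) (\<lambda>g. enc (sz \<tau>) (sz \<tau>) (\<lambda>x. (ap (sz \<tau>) g ^^ m) x))"
  by (simp add: cv_def ach_def eval_achb)

lemma it_bound: "x < b \<Longrightarrow> (ap b g ^^ m) x < b"
  by (induct m) (auto simp: ap_lt)

definition Sc :: "stype \<Rightarrow> nat \<Rightarrow> nat" where
  "Sc \<tau> c = enc (sz \<tau> ^ sz \<tau>) (sz \<tau> ^ sz \<tau>)
     (\<lambda>g. enc (sz \<tau>) (sz \<tau>) (\<lambda>x. ap (sz \<tau>) g (ap (sz \<tau>) (ap (sz \<tau> ^ sz \<tau>) c g) x)))"

lemma cv_Suc: "cv \<tau> (Suc m) = Sc \<tau> (cv \<tau> m)"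
proof -
  define b where "b = sz \<tau>"
  have b0: "0 < b" using sz_pos b_def by simp
  have inner: "\<forall>g<b ^ b. enc b b (\<lambda>x. (ap b g ^^ m) x) < b ^ b"
    using it_bound by (auto intro!: enc_bound)
  have "ap (b ^ b) (cv \<tau> m) g = enc b b (\<lambda>x. (ap b g ^^ m) x)" if "g < b ^ b" for g
    unfolding cv_eq b_def[symmetric] by (rule ap_enc) (use inner that in auto)
  moreover have "ap b (enc b b (\<lambda>x. (ap b g ^^ m) x)) x = (ap b g ^^ m) x" if "x < b" for g x
    by (rule ap_enc) (use it_bound that in auto)
  ultimately show ?thesis
    unfolding Sc_def cv_eq b_def[symmetric]
    by (intro enc_cong) simp
qed

lemma cv_bound: "cv \<tau> m < sz (omega \<tau>)"
  unfolding cv_def by (rule eval_bound[OF aty_ach valid_nil])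

lemma cv_01: "cv \<tau> 0 \<noteq> cv \<tau> 1"
proof
  assume eq: "cv \<tau> 0 = cv \<tau> 1"
  define b where "b = sz \<tau>"
  have b2: "2 \<le> b" using sz_ge2 b_def by simp
  define g0 where "g0 = enc b b (\<lambda>_. 1)"
  have g0b: "g0 < b ^ b" unfolding g0_def using b2 by (intro enc_bound) auto
  have inner: "\<forall>g<b ^ b. enc b b (\<lambda>x. (ap b g ^^ m) x) < b ^ b" for m
    using it_bound by (auto intro!: enc_bound)
  have "ap (b ^ b) (cv \<tau> m) g0 = enc b b (\<lambda>x. (ap b g0 ^^ m) x)" for m
    unfolding cv_eq b_def[symmetric] by (rule ap_enc) (use inner g0b in auto)
  then have "ap b (ap (b ^ b) (cv \<tau> m) g0) 0 = (ap b g0 ^^ m) 0" for m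
    using b2 it_bound[of 0 b g0 m] by (simp add: ap_enc it_bound)
  from this[of 0] this[of 1] eq have "0 = ap b g0 0" by simp
  moreover have "ap b g0 0 = 1" unfolding g0_def using b2 by (subst ap_enc) auto
  ultimately show False by simp
qed

lemma eventually_periodic:
  fixes s :: "nat \<Rightarrow> nat"
  assumes suc: "\<And>m. s (Suc m) = S (s m)" and bnd: "\<And>m. s m < K"
  shows "\<exists>i p. 0 < p \<and> (\<forall>m\<ge>i. s (m + p) = s m)"
proof -
  have "\<not> inj_on s {..K}"
  proof
    assume "inj_on s {..K}"
    then have "card (s ` {..K}) = Suc K" by (simp add: card_image)
    moreover have "s ` {..K} \<subseteq> {..<K}" using bnd by auto
    then have "card (s ` {..K}) \<le> K" using card_mono[of "{..<K}"] by fastforce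
    ultimately show False by simp
  qed
  then obtain i j where ij: "i \<noteq> j" "s i = s j" unfolding inj_on_def by blast
  have key: "\<And>i j. i < j \<Longrightarrow> s i = s j \<Longrightarrow> \<exists>i p. 0 < p \<and> (\<forall>m\<ge>i. s (m + p) = s m)"
  proof -
    fix i j :: nat assume lt: "i < j" and e: "s i = s j"
    have d: "s (i + d) = s (j + d)" for d
      by (induct d) (simp_all add: e suc)
    have "\<forall>m\<ge>i. s (m + (j - i)) = s m"
    proof (intro allI impI)
      fix m assume "i \<le> m"
      then have "m + (j - i) = j + (m - i)" "m = i + (m - i)" using lt by auto
      then show "s (m + (j - i)) = s m" using d[of "m - i"] by metis
    qed
    then show "\<exists>i p. 0 < p \<and> (\<forall>m\<ge>i. s (m + p) = s m)" using lt by (intro exI[of _ i] exI[of _ "j - i"]) auto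
  qed
  show ?thesis
  proof (cases "i < j")
    case True then show ?thesis using key ij by blast
  next
    case False then have "j < i" using ij by simp
    then show ?thesis using key ij by metis
  qed
qed

lemma arrows3: "arrows (replicate 3 T) T = Fun T (Fun T (Fun T T))"
  by (simp add: arrows_def numeral_3_eq_3)

lemma cv1_id: "eval \<rho>0 (AAbs (Fun \<tau> \<tau>) (AVar 0) (Fun \<tau> \<tau>)) = cv \<tau> 1"
proof -
  have "eval \<rho>0 (AAbs (Fun \<tau> \<tau>) (AVar 0) (Fun \<tau> \<tau>)) = enc (sz \<tau> ^ sz \<tau>) (sz \<tau> ^ sz \<tau>) (\<lambda>g. g)"
    by simp
  also have "\<dots> = cv \<tau> 1"
    unfolding cv_eq by (intro enc_cong) (simp add: enc_ap sz_pos)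
  finally show ?thesis .
qed

lemma sem_main:
  assumes ty: "typing [] E (arrows (replicate 3 (omega \<tau>)) (omega \<tau>))"
  obtains F where "\<And>a b c k. beta_eta_conv (foldl App E (map church [a, b, c])) (church k) \<Longrightarrow>
     F (cv \<tau> a) (cv \<tau> b) (cv \<tau> c) = cv \<tau> k"
proof -
  define w where "w = omega \<tau>"
  from typing_aty[OF ty] obtain aE where aE: "erase aE = E" "aty [] aE (Fun w (Fun w (Fun w w)))"
    by (auto simp: arrows3 w_def)
  define F where "F x y z = ap (sz w) (ap (sz (Fun w w)) (ap (sz (Fun w (Fun w w))) (eval \<rho>0 aE) x) y) z"
    for x y z
  show ?thesis
  proof (rule that)
    fix a b c k
    assume conv: "beta_eta_conv (foldl App E (map church [a, b, c])) (church k)"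
    define big where "big = AApp (AApp (AApp aE (ach \<tau> a) (Fun w (Fun w w))) (ach \<tau> b) (Fun w w)) (ach \<tau> c) w"
    have eb: "erase big = foldl App E (map church [a, b, c])"
      by (simp add: big_def erase_ach aE)
    have tb: "aty [] big w"
      unfolding big_def using aE(2) aty_ach[of \<tau>, folded w_def]
      by (blast intro: aty.aapp)
    have vb: "eval \<rho>0 big = F (cv \<tau> a) (cv \<tau> b) (cv \<tau> c)"
      by (simp add: big_def F_def cv_def)
    from CR_beta_eta[OF conv] obtain u where u: "red1\<^sup>*\<^sup>* (foldl App E (map church [a, b, c])) u"
      "red1\<^sup>*\<^sup>* (church k) u" by blast
    from reds_pres[OF u(1) eb tb] obtain a' where a': "erase a' = u" "aty [] a' w"
      "eval \<rho>0 a' = eval \<rho>0 big" using valid_nil by blast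
    from reds_church[OF u(2)] have "eval \<rho>0 a' = cv \<tau> k"
    proof
      assume "u = church k"
      then have "a' = ach \<tau> k" using ach_unique a' w_def by blast
      then show ?thesis by (simp add: cv_def)
    next
      assume "k = 1 \<and> u = Abs (Var 0)"
      then have "a' = AAbs (Fun \<tau> \<tau>) (AVar 0) (Fun \<tau> \<tau>)" "k = 1" using id_unique a' w_def by blast+
      then show ?thesis using cv1_id by simp
    qed
    then show "F (cv \<tau> a) (cv \<tau> b) (cv \<tau> c) = cv \<tau> k" using a' vb by simp
  qed
qed

lemma A_periodic:
  fixes A :: "nat set" and f :: "nat \<Rightarrow> nat \<Rightarrow> nat \<Rightarrow> nat"
  assumes fdef: "\<And>m n1 n2. f m n1 n2 = (if m \<in> A then n1 else n2)"
    and sd: "strictly_definable 3 (\<lambda>xs. f (xs ! 0) (xs ! 1) (xs ! 2))"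
  shows "\<exists>i p. 0 < p \<and> (\<forall>m\<ge>i. (m + p \<in> A) = (m \<in> A))"
proof -
  from sd obtain \<tau> E where ty: "typing [] E (arrows (replicate 3 (omega \<tau>)) (omega \<tau>))"
    and cnv: "\<forall>ns. length ns = 3 \<longrightarrow> beta_eta_conv (foldl App E (map church ns))
        (church (f (ns ! 0) (ns ! 1) (ns ! 2)))"
    unfolding strictly_definable_def by blast
  from sem_main[OF ty] obtain F where F: "\<And>a b c k. beta_eta_conv (foldl App E (map church [a, b, c])) (church k) \<Longrightarrow>
     F (cv \<tau> a) (cv \<tau> b) (cv \<tau> c) = cv \<tau> k" by blast
  have mem: "(m \<in> A) = (F (cv \<tau> m) (cv \<tau> 0) (cv \<tau> 1) = cv \<tau> 0)" for m
  proof -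
    have "F (cv \<tau> m) (cv \<tau> 0) (cv \<tau> 1) = cv \<tau> (f m 0 1)"
      using F cnv[rule_format, of "[m, 0, 1]"] by simp
    then show ?thesis using cv_01[of \<tau>] by (auto simp: fdef)
  qed
  from eventually_periodic[of "cv \<tau>" "Sc \<tau>" "sz (omega \<tau>)", OF cv_Suc cv_bound]
  obtain i p where "0 < p" "\<forall>m\<ge>i. cv \<tau> (m + p) = cv \<tau> m" by blast
  then show ?thesis using mem by metis
qed



definition pr :: "nat \<Rightarrow> nat list \<Rightarrow> nat" where "pr k = (\<lambda>xs. xs ! k)"

lemma classG_pr: "k < 3 \<Longrightarrow> classG 3 (pr k)"
  unfolding pr_def by (rule classG.ext) (rule ext_poly.proj)

lemma per_mult:
  fixes A :: "nat set" and i p m k :: nat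
  assumes per: "\<forall>m\<ge>i. (m + p \<in> A) = (m \<in> A)"
  shows "m \<ge> i \<Longrightarrow> (m + p * k \<in> A) = (m \<in> A)"
proof (induct k)
  case 0 then show ?case by simp
next
  case (Suc k)
  have "m + p * Suc k = (m + p * k) + p" by simp
  then show ?case using per Suc by (metis le_add1 order_trans)
qed

lemma per_mod:
  fixes A :: "nat set" and i p a b :: nat
  assumes per: "\<forall>m\<ge>i. (m + p \<in> A) = (m \<in> A)"
    and a: "a \<ge> i" and b: "b \<ge> i" and md: "a mod p = b mod p"
  shows "(a \<in> A) = (b \<in> A)"
proof (cases "a \<le> b")
  case True
  then obtain s where "b = a + p * s" using mod_eq_nat2E[OF md] by blast
  then show ?thesis using per_mult[OF per a] by simp
next
  case False
  then obtain s where "a = b + p * s" using mod_eq_nat1E[OF md] by fastforce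
  then show ?thesis using per_mult[OF per b] by simp
qed

lemma in_G_periodic:
  fixes A :: "nat set" and p i :: nat
  assumes p0: "0 < p" and per: "\<forall>m\<ge>i. (m + p \<in> A) = (m \<in> A)"
  shows "in_G 3 (\<lambda>xs. if xs ! 0 \<in> A then xs ! 1 else xs ! 2)"
proof -
  define tgt where "tgt = (\<lambda>xs::nat list. if xs ! 0 \<in> A then xs ! 1 else xs ! 2)"
  define P where "P = 2 * p"
  have P2: "2 \<le> P" using p0 P_def by simp
  have perP: "\<forall>m\<ge>i. (m + P \<in> A) = (m \<in> A)"
  proof (intro allI impI)
    fix m assume m: "i \<le> m"
    then have "i \<le> m + p" by simp
    then have "(m + p + p \<in> A) = (m + p \<in> A)" using per by blast
    moreover have "(m + p \<in> A) = (m \<in> A)" using per m by blast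
    moreover have "m + P = m + p + p" by (simp add: P_def)
    ultimately show "(m + P \<in> A) = (m \<in> A)" by (simp only:)
  qed
  define v where "v k = (if k \<in> A then pr 1 else pr 2)" for k
  have cv: "classG 3 (v k)" for k unfolding v_def by (auto intro: classG_pr)
  define sel where "sel j = v (j + P * i)" for j
  define gs where "gs = pr 0 # map sel [0..<P]"
  define gper where "gper = (\<lambda>xs. (\<lambda>ys. ys ! Suc (ys ! 0 mod P)) (map (\<lambda>g. g xs) gs))"
  have cgper: "classG 3 gper"
    unfolding gper_def
    by (rule classG.comp[OF classG.f1[OF P2]]) (auto simp: gs_def sel_def intro: classG_pr cv)
  have gper_ok: "gper xs = tgt xs" if "xs ! 0 \<ge> i" for xs
  proof -
    have "xs ! 0 mod P < P" using P2 by simp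
    then have "gper xs = sel (xs ! 0 mod P) xs"
      by (simp add: gper_def gs_def pr_def nth_Cons')
    also have "\<dots> = tgt xs"
    proof -
      have "(xs ! 0 mod P + P * i \<in> A) = (xs ! 0 \<in> A)"
      proof (rule per_mod[OF perP])
        have "i \<le> P * i" using P2 by simp
        then show "i \<le> xs ! 0 mod P + P * i" by linarith
        show "i \<le> xs ! 0" using that .
        show "(xs ! 0 mod P + P * i) mod P = xs ! 0 mod P" by simp
      qed
      then show ?thesis by (simp add: sel_def v_def tgt_def pr_def)
    qed
    finally show ?thesis .
  qed
  define M where "M = max i 1"
  have chain: "\<exists>g. classG 3 g \<and> (\<forall>xs. xs ! 0 \<ge> M - d \<longrightarrow> xs ! 0 \<ge> 1 \<longrightarrow> g xs = tgt xs)" for d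
  proof (induct d)
    case 0 then show ?case using cgper gper_ok M_def by (intro exI[of _ gper]) auto
  next
    case (Suc d)
    then obtain g where g: "classG 3 g" "\<forall>xs. xs ! 0 \<ge> M - d \<longrightarrow> xs ! 0 \<ge> 1 \<longrightarrow> g xs = tgt xs" by blast
    define k where "k = M - Suc d"
    show ?case
    proof (cases "k = 0")
      case True
      then have "M - d \<le> 1" unfolding k_def by simp
      then show ?thesis using g by (intro exI[of _ g]) auto
    next
      case False
      then have k1: "1 \<le> k" by simp
      define g' where "g' = (\<lambda>xs. (\<lambda>ys. if ys ! 0 \<le> k then ys ! 1 else ys ! 2) (map (\<lambda>g. g xs) [pr 0, v k, g]))"
      have "classG 3 g'"
        unfolding g'_def
        by (rule classG.comp[OF classG.f2[OF k1]]) (auto intro: classG_pr cv g(1))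
      moreover have "g' xs = tgt xs" if "xs ! 0 \<ge> M - Suc d" "xs ! 0 \<ge> 1" for xs
      proof (cases "xs ! 0 \<le> k")
        case True
        then have "xs ! 0 = k" using that k_def by simp
        then show ?thesis by (simp add: g'_def v_def tgt_def pr_def)
      next
        case False
        then have "xs ! 0 \<ge> M - d" using k_def k1 by simp
        then show ?thesis using g(2) that False by (simp add: g'_def pr_def)
      qed
      ultimately show ?thesis by blast
    qed
  qed
  from chain[of M] obtain g1 where g1: "classG 3 g1" "\<forall>xs. xs ! 0 \<ge> 1 \<longrightarrow> g1 xs = tgt xs" by auto
  define h where "h = (\<lambda>xs. (\<lambda>ys. if ys ! 0 = 0 then ys ! 1 else ys ! 2) (map (\<lambda>g. g xs) [pr 0, v 0, g1]))"
  have "classG 3 h"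
    unfolding h_def
    by (rule classG.comp[OF classG.ext[OF ext_poly.ifzero]]) (auto intro: classG_pr cv g1(1))
  moreover have "h xs = tgt xs" for xs
  proof (cases "xs ! 0 = 0")
    case True then show ?thesis by (simp add: h_def v_def tgt_def pr_def)
  next
    case False then show ?thesis using g1(2) by (simp add: h_def pr_def)
  qed
  ultimately show ?thesis unfolding in_G_def tgt_def[symmetric] by blast
qed


theorem theorem3:
  fixes A :: "nat set" and f :: "nat \<Rightarrow> nat \<Rightarrow> nat \<Rightarrow> nat"
  assumes "\<And>m n1 n2. f m n1 n2 = (if m \<in> A then n1 else n2)"
  shows "\<not> strictly_definable 3 (\<lambda>xs. f (xs ! 0) (xs ! 1) (xs ! 2))
         \<or> in_G 3 (\<lambda>xs. f (xs ! 0) (xs ! 1) (xs ! 2))"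
proof (cases "strictly_definable 3 (\<lambda>xs. f (xs ! 0) (xs ! 1) (xs ! 2))")
  case False then show ?thesis by blast
next
  case True
  from A_periodic[OF assms True] obtain i p where "0 < p" "\<forall>m\<ge>i. (m + p \<in> A) = (m \<in> A)"
    by blast
  from in_G_periodic[OF this] have "in_G 3 (\<lambda>xs. if xs ! 0 \<in> A then xs ! 1 else xs ! 2)" .
  moreover have "(\<lambda>xs. f (xs ! 0) (xs ! 1) (xs ! 2)) = (\<lambda>xs. if xs ! 0 \<in> A then xs ! 1 else xs ! 2)"
    using assms by (simp add: fun_eq_iff)
  ultimately show ?thesis by simp
qed

end
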